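(* Let $X$ be a convex metric space over a Boolean ring $B$, $0\in X$, and $R=\{x_{1},\ldots,x_{n}\}$ a referential of $(X,0)$. Let $Y$ be a convex metric space over $B$ and $0'\in Y$. A map $f:R\to Y$ extends to a contractive map $\hat{f}:X\to Y$ with $\hat f(0)=0'$ if and only if $d(0',f(x_{i}))\le d(0,x_{i})$ for $i=1,\ldots,n$; moreover such an extension is unique.
   Context: $B$ is a Boolean ring ($a\vee b=a+b+ab$, $a\le b\iff ab=a$; $a_1\oplus\cdots\oplus a_n$ denotes a sum of pairwise disjoint elements). A Boolean metric space over $B$: set $X$ with $d:X\times X\to B$, $d(x,y)=0\iff x=y$, symmetric, $d(x,z)\le d(x,y)\vee d(y,z)$. For $x_1,\dots,x_n\in X$, $a_i\in B$ with $a_1\oplus\cdots\oplus a_n=1$, $x$ is a convex combination of the $x_i$ with coefficients $a_i$ if $a_id(x,x_i)=0$ for all $i$; $X$ is convex if all such combinations exist. A map is contractive if $d(f(x),f(y))\le d(x,y)$. In $(X,0)$: $|x|=d(0,x)$; $x\perp y$ iff $d(x,y)=|x|\vee|y|$; a finite $R\subseteq X$ is orthogonal if $0\notin R$ and distinct elements are orthogonal; a referential of $(X,0)$ is an orthogonal $R$ such that every element of $X$ is a convex combination of elements of $R\cup\{0\}$. *)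

theory Defs
  imports Main
begin

text \<open>We use the class combination comm_ring + comm_monoid_mult (which does not force 0 \<noteq> 1)
  together with an explicit idempotency hypothesis in the theorem.\<close>

definition bjoin :: "'b::{comm_ring,comm_monoid_mult} \<Rightarrow> 'b \<Rightarrow> 'b" where
  "bjoin a b = a + b + a * b"

definition ble :: "'b::{comm_ring,comm_monoid_mult} \<Rightarrow> 'b \<Rightarrow> bool" where
  "ble a b \<longleftrightarrow> a * b = a"

definition boolean_metric :: "'a set \<Rightarrow> ('a \<Rightarrow> 'a \<Rightarrow> 'b::{comm_ring,comm_monoid_mult}) \<Rightarrow> bool" where
  "boolean_metric X d \<longleftrightarrow>
     (\<forall>x\<in>X. \<forall>y\<in>X. d x y = 0 \<longleftrightarrow> x = y) \<and>
     (\<forall>x\<in>X. \<forall>y\<in>X. d x y = d y x) \<and>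
     (\<forall>x\<in>X. \<forall>y\<in>X. \<forall>z\<in>X. ble (d x z) (bjoin (d x y) (d y z)))"

definition partition_of_unity :: "nat \<Rightarrow> (nat \<Rightarrow> 'b::{comm_ring,comm_monoid_mult}) \<Rightarrow> bool" where
  "partition_of_unity n a \<longleftrightarrow>
     (\<forall>i<n. \<forall>j<n. i \<noteq> j \<longrightarrow> a i * a j = 0) \<and> (\<Sum>i<n. a i) = 1"

definition is_convex_comb ::
  "('a \<Rightarrow> 'a \<Rightarrow> 'b::{comm_ring,comm_monoid_mult}) \<Rightarrow> 'a \<Rightarrow> nat \<Rightarrow> (nat \<Rightarrow> 'a) \<Rightarrow> (nat \<Rightarrow> 'b) \<Rightarrow> bool" where
  "is_convex_comb d x n p a \<longleftrightarrow> partition_of_unity n a \<and> (\<forall>i<n. a i * d x (p i) = 0)"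

definition convex_bms :: "'a set \<Rightarrow> ('a \<Rightarrow> 'a \<Rightarrow> 'b::{comm_ring,comm_monoid_mult}) \<Rightarrow> bool" where
  "convex_bms X d \<longleftrightarrow>
     (\<forall>n p a. (\<forall>i<n. p i \<in> X) \<and> partition_of_unity n a \<longrightarrow>
        (\<exists>x\<in>X. is_convex_comb d x n p a))"

definition contractive ::
  "'a set \<Rightarrow> ('a \<Rightarrow> 'a \<Rightarrow> 'b::{comm_ring,comm_monoid_mult}) \<Rightarrow> ('c \<Rightarrow> 'c \<Rightarrow> 'b) \<Rightarrow> ('a \<Rightarrow> 'c) \<Rightarrow> bool" where
  "contractive X d d' f \<longleftrightarrow> (\<forall>x\<in>X. \<forall>y\<in>X. ble (d' (f x) (f y)) (d x y))"

definition bnorm :: "('a \<Rightarrow> 'a \<Rightarrow> 'b) \<Rightarrow> 'a \<Rightarrow> 'a \<Rightarrow> 'b" where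
  "bnorm d o0 x = d o0 x"

definition orth :: "('a \<Rightarrow> 'a \<Rightarrow> 'b::{comm_ring,comm_monoid_mult}) \<Rightarrow> 'a \<Rightarrow> 'a \<Rightarrow> 'a \<Rightarrow> bool" where
  "orth d o0 x y \<longleftrightarrow> d x y = bjoin (bnorm d o0 x) (bnorm d o0 y)"

definition orthogonal_set :: "('a \<Rightarrow> 'a \<Rightarrow> 'b::{comm_ring,comm_monoid_mult}) \<Rightarrow> 'a \<Rightarrow> 'a set \<Rightarrow> bool" where
  "orthogonal_set d o0 R \<longleftrightarrow> finite R \<and> o0 \<notin> R \<and>
     (\<forall>x\<in>R. \<forall>y\<in>R. x \<noteq> y \<longrightarrow> orth d o0 x y)"

definition referential ::
  "'a set \<Rightarrow> ('a \<Rightarrow> 'a \<Rightarrow> 'b::{comm_ring,comm_monoid_mult}) \<Rightarrow> 'a \<Rightarrow> 'a set \<Rightarrow> bool" where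
  "referential X d o0 R \<longleftrightarrow> R \<subseteq> X \<and> orthogonal_set d o0 R \<and>
     (\<forall>x\<in>X. \<exists>n p a. (\<forall>i<n. p i \<in> R \<union> {o0}) \<and> is_convex_comb d x n p a)"

end

theory Submission
  imports Defs
begin

lemma char2:
  fixes x :: "'b::{comm_ring,comm_monoid_mult}"
  assumes idem: "\<And>a::'b. a * a = a"
  shows "x + x = 0"
proof -
  have "(x+x)*(x+x) = x+x" by (rule idem)
  moreover have "(x+x)*(x+x) = x*x+x*x+(x*x+x*x)" by (simp only: distrib_left distrib_right)
  ultimately have "x+x+x+x = x+x" by (simp add: idem add.assoc)
  hence "(x+x)+(x+x) = (x+x)+0" by (simp add: add.assoc)
  thus ?thesis by (rule add_left_imp_eq)
qed

lemma absorb: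
  fixes v v' w' :: "'b::{comm_ring,comm_monoid_mult}"
  assumes idem: "\<And>a::'b. a * a = a" and h: "v * v' = v"
  shows "v * bjoin v' w' = v"
proof -
  have "v * bjoin v' w' = v*v' + v*w' + (v*v')*w'" by (simp add: bjoin_def algebra_simps)
  also have "\<dots> = v + (v*w' + v*w')" using h by (simp add: add.assoc)
  also have "\<dots> = v" using char2[OF idem] by simp
  finally show ?thesis .
qed

lemma bjoin_comm: "bjoin (a::'b::{comm_ring,comm_monoid_mult}) b = bjoin b a"
  by (simp add: bjoin_def algebra_simps)

lemma bjoin_mono:
  fixes v w v' w' :: "'b::{comm_ring,comm_monoid_mult}"
  assumes idem: "\<And>a::'b. a * a = a" and h1: "ble v v'" and h2: "ble w w'"
  shows "ble (bjoin v w) (bjoin v' w')"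
proof -
  have a: "v * bjoin v' w' = v" using absorb[OF idem] h1 by (simp add: ble_def)
  have b: "w * bjoin v' w' = w" using absorb[OF idem, of w w' v'] h2 bjoin_comm[of v' w']
    by (simp add: ble_def)
  have "bjoin v w * bjoin v' w' = v * bjoin v' w' + w * bjoin v' w' + v * (w * bjoin v' w')"
    by (simp add: bjoin_def algebra_simps)
  also have "\<dots> = bjoin v w" using a b by (simp add: bjoin_def)
  finally show ?thesis by (simp add: ble_def)
qed

lemma ble_trans: "ble (u::'b::{comm_ring,comm_monoid_mult}) v \<Longrightarrow> ble v w \<Longrightarrow> ble u w"
  unfolding ble_def by (metis mult.assoc)

lemma leon_ble: "ble (u::'b::{comm_ring,comm_monoid_mult}) v \<Longrightarrow> b*u*v = b*u"
  unfolding ble_def by (simp add: mult.assoc)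

lemma leon_trans: "(b::'b::{comm_ring,comm_monoid_mult})*u*v = b*u \<Longrightarrow> b*v*w = b*v \<Longrightarrow> b*u*w = b*u"
  by (metis mult.assoc mult.commute)

lemma leon_tri:
  assumes "ble (u::'b::{comm_ring,comm_monoid_mult}) (bjoin v w)" "b*w = 0"
  shows "b*u*v = b*u"
proof -
  have "u*(v+w+v*w) = u" using assms(1) by (simp add: ble_def bjoin_def)
  hence "b*u = b*u*v + u*(b*w) + u*(b*w)*v"
    by (metis (no_types, lifting) distrib_left mult.assoc mult.commute)
  thus ?thesis using assms(2) by simp
qed

lemma leon_tri2:
  assumes "ble (u::'b::{comm_ring,comm_monoid_mult}) (bjoin w v)" "b*w = 0"
  shows "b*u*v = b*u"
  using leon_tri[of u v w b] assms bjoin_comm[of w v] by simp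

lemma leon_zero: "(b::'b::{comm_ring,comm_monoid_mult})*v = 0 \<Longrightarrow> b*u*v = b*u \<Longrightarrow> b*u = 0"
  by (metis mult.assoc mult.commute mult_zero_right)

lemma pou_ble:
  assumes "partition_of_unity n a" "\<forall>i<n. a i * u * v = a i * (u::'b::{comm_ring,comm_monoid_mult})"
  shows "ble u v"
proof -
  have s: "(\<Sum>i<n. a i) = 1" using assms(1) by (simp add: partition_of_unity_def)
  have "u*v = (\<Sum>i<n. a i) * u * v" using s by simp
  also have "\<dots> = (\<Sum>i<n. a i * u * v)" by (simp add: sum_distrib_right)
  also have "\<dots> = (\<Sum>i<n. a i * u)" using assms(2) by simp
  also have "\<dots> = (\<Sum>i<n. a i) * u" by (simp add: sum_distrib_right)
  also have "\<dots> = u" using s by simp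
  finally show ?thesis by (simp add: ble_def)
qed

lemma pou_zero:
  assumes "partition_of_unity n a" "\<forall>i<n. a i * (u::'b::{comm_ring,comm_monoid_mult}) = 0"
  shows "u = 0"
proof -
  have s: "(\<Sum>i<n. a i) = 1" using assms(1) by (simp add: partition_of_unity_def)
  have "u = (\<Sum>i<n. a i) * u" using s by simp
  also have "\<dots> = (\<Sum>i<n. a i * u)" by (simp add: sum_distrib_right)
  also have "\<dots> = 0" using assms(2) by simp
  finally show ?thesis .
qed

lemma bm_zero: "boolean_metric X d \<Longrightarrow> x \<in> X \<Longrightarrow> d x x = 0"
  by (simp add: boolean_metric_def)
lemma bm_eq: "boolean_metric X d \<Longrightarrow> x \<in> X \<Longrightarrow> y \<in> X \<Longrightarrow> d x y = 0 \<Longrightarrow> x = y"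
  by (simp add: boolean_metric_def)
lemma bm_sym: "boolean_metric X d \<Longrightarrow> x \<in> X \<Longrightarrow> y \<in> X \<Longrightarrow> d x y = d y x"
  by (simp add: boolean_metric_def)
lemma bm_tri: "boolean_metric X d \<Longrightarrow> x \<in> X \<Longrightarrow> y \<in> X \<Longrightarrow> z \<in> X \<Longrightarrow> ble (d x z) (bjoin (d x y) (d y z))"
  by (simp add: boolean_metric_def)

lemma ble_zero: "ble (u::'b::{comm_ring,comm_monoid_mult}) 0 \<Longrightarrow> u = 0"
  by (simp add: ble_def)

theorem mainTheorem10:
  fixes X :: "'a set" and d :: "'a \<Rightarrow> 'a \<Rightarrow> 'b::{comm_ring,comm_monoid_mult}"
    and Y :: "'c set" and d' :: "'c \<Rightarrow> 'c \<Rightarrow> 'b"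
    and o0 :: 'a and o0' :: 'c and R :: "'a set" and f :: "'a \<Rightarrow> 'c"
  assumes boolean_ring: "\<And>a::'b. a * a = a"
    and X: "boolean_metric X d" "convex_bms X d" "o0 \<in> X"
    and R: "referential X d o0 R"
    and Y: "boolean_metric Y d'" "convex_bms Y d'" "o0' \<in> Y"
    and f: "f ` R \<subseteq> Y"
  shows "((\<exists>g. (\<forall>x\<in>X. g x \<in> Y) \<and> contractive X d d' g \<and> g o0 = o0' \<and> (\<forall>x\<in>R. g x = f x))
            \<longleftrightarrow> (\<forall>x\<in>R. ble (d' o0' (f x)) (d o0 x)))
       \<and> (\<forall>g h. (\<forall>x\<in>X. g x \<in> Y) \<and> contractive X d d' g \<and> g o0 = o0' \<and> (\<forall>x\<in>R. g x = f x)
             \<and> (\<forall>x\<in>X. h x \<in> Y) \<and> contractive X d d' h \<and> h o0 = o0' \<and> (\<forall>x\<in>R. h x = f x)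
             \<longrightarrow> (\<forall>x\<in>X. g x = h x))"
proof -
  define F where "F p = (if p = o0 then o0' else f p)" for p
  define S where "S = R \<union> {o0}"
  define P where "P x y \<longleftrightarrow> y \<in> Y \<and> (\<forall>p\<in>S. ble (d' y (F p)) (d x p))" for x y
  have RX: "R \<subseteq> X" and o0R: "o0 \<notin> R" and orth: "\<forall>x\<in>R. \<forall>y\<in>R. x \<noteq> y \<longrightarrow> orth d o0 x y"
    using R by (auto simp: referential_def orthogonal_set_def)
  have rep: "\<exists>n p a. (\<forall>i<n. p i \<in> S) \<and> is_convex_comb d x n p a" if "x \<in> X" for x
    using R that by (auto simp: referential_def S_def)
  have SX: "p \<in> X" if "p \<in> S" for p using that RX X(3) by (auto simp: S_def)
  have FY: "F p \<in> Y" if "p \<in> S" for p using that f Y(3) by (auto simp: S_def F_def)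
  have uniq: "y = y'" if hh: "x \<in> X" "P x y" "P x y'" for x y y'
  proof -
    obtain n p a where p: "\<forall>i<n. p i \<in> S" and cc: "is_convex_comb d x n p a"
      using rep[OF hh(1)] by blast
    have pa: "partition_of_unity n a" using cc by (simp add: is_convex_comb_def)
    have y: "y \<in> Y" "y' \<in> Y" using hh by (auto simp: P_def)
    have "\<forall>i<n. a i * d' y y' = 0"
    proof (intro allI impI)
      fix i assume i: "i < n"
      have ax: "a i * d x (p i) = 0" using cc i by (simp add: is_convex_comb_def)
      have z1: "a i * d' y (F (p i)) = 0"
        using leon_zero[OF ax leon_ble] hh(2) p i by (auto simp: P_def)
      have z2: "a i * d' y' (F (p i)) = 0"
        using leon_zero[OF ax leon_ble] hh(3) p i by (auto simp: P_def)
      have z2': "a i * d' (F (p i)) y' = 0" using z2 bm_sym[OF Y(1) y(2) FY] p i by simp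
      have "a i * d' y y' * d' y (F (p i)) = a i * d' y y'"
        using leon_tri[OF bm_tri[OF Y(1) y(1) FY y(2)] z2'] p i by simp
      thus "a i * d' y y' = 0" using leon_zero[OF z1] by simp
    qed
    hence "d' y y' = 0" using pou_zero[OF pa] by blast
    thus ?thesis using bm_eq[OF Y(1) y] by simp
  qed
  have C: "ble (d' (F p) (F q)) (d p q)" if hyp: "\<forall>x\<in>R. ble (d' o0' (f x)) (d o0 x)"
    and pq: "p \<in> S" "q \<in> S" for p q
  proof (cases "p = q")
    case True
    thus ?thesis using bm_zero[OF Y(1) FY[OF pq(2)]] by (simp add: ble_def)
  next
    case False
    show ?thesis
    proof (cases "p = o0")
      case True
      hence "q \<in> R" using False pq by (auto simp: S_def)
      thus ?thesis using hyp True o0R by (auto simp: F_def)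
    next
      case pn: False
      hence pR: "p \<in> R" using pq by (auto simp: S_def)
      show ?thesis
      proof (cases "q = o0")
        case True
        have "ble (d' o0' (f p)) (d o0 p)" using hyp pR by blast
        moreover have "d' o0' (f p) = d' (f p) o0'" using bm_sym[OF Y(1)] Y(3) f pR by auto
        moreover have "d o0 p = d p o0" using bm_sym[OF X(1)] X(3) RX pR by auto
        ultimately show ?thesis using True pn by (simp add: F_def)
      next
        case qn: False
        hence qR: "q \<in> R" using pq by (auto simp: S_def)
        have fp: "f p \<in> Y" and fq: "f q \<in> Y" using f pR qR by auto
        have o: "d p q = bjoin (d o0 p) (d o0 q)" using orth pR qR False
          by (simp add: orth_def bnorm_def)
        have t: "ble (d' (f p) (f q)) (bjoin (d' (f p) o0') (d' o0' (f q)))"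
          using bm_tri[OF Y(1) fp Y(3) fq] .
        have "d' (f p) o0' = d' o0' (f p)" using bm_sym[OF Y(1) fp Y(3)] .
        hence "ble (bjoin (d' (f p) o0') (d' o0' (f q))) (bjoin (d o0 p) (d o0 q))"
          using bjoin_mono[OF boolean_ring] hyp pR qR by simp
        hence "ble (d' (f p) (f q)) (d p q)" using ble_trans[OF t] o by simp
        thus ?thesis using pn qn by (simp add: F_def)
      qed
    qed
  qed
  have ex: "\<exists>y. P x y" if hyp: "\<forall>x\<in>R. ble (d' o0' (f x)) (d o0 x)" and x: "x \<in> X" for x
  proof -
    obtain n p a where p: "\<forall>i<n. p i \<in> S" and cc: "is_convex_comb d x n p a"
      using rep[OF x] by blast
    have pa: "partition_of_unity n a" using cc by (simp add: is_convex_comb_def)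
    obtain y where y: "y \<in> Y" and ccy: "is_convex_comb d' y n (\<lambda>i. F (p i)) a"
    proof -
      have c1: "\<forall>i<n. F (p i) \<in> Y" using p FY by blast
      have cv: "(\<forall>i<n. F (p i) \<in> Y) \<and> partition_of_unity n a \<longrightarrow> (\<exists>y\<in>Y. is_convex_comb d' y n (\<lambda>i. F (p i)) a)"
        by (rule spec[where x=a, OF spec[where x="\<lambda>i. F (p i)", OF spec[where x=n, OF Y(2)[unfolded convex_bms_def]]]])
      have "\<exists>y\<in>Y. is_convex_comb d' y n (\<lambda>i. F (p i)) a" using cv c1 pa by blast
      thus ?thesis using that by blast
    qed
    have "ble (d' y (F q)) (d x q)" if q: "q \<in> S" for q
    proof (rule pou_ble[OF pa], intro allI impI)
      fix i assume i: "i < n"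
      have pi: "p i \<in> S" using p i by blast
      have ay: "a i * d' y (F (p i)) = 0" using ccy i by (simp add: is_convex_comb_def)
      have ax0: "a i * d x (p i) = 0" using cc i by (simp add: is_convex_comb_def)
      have ax: "a i * d (p i) x = 0" using ax0 bm_sym[OF X(1) x SX[OF pi]] by simp
      have t1: "a i * d' y (F q) * d' (F (p i)) (F q) = a i * d' y (F q)"
        using leon_tri2[OF bm_tri[OF Y(1) y FY[OF pi] FY[OF q]] ay] .
      have t2: "a i * d' (F (p i)) (F q) * d (p i) q = a i * d' (F (p i)) (F q)"
        using leon_ble[OF C[OF hyp pi q]] .
      have t3: "a i * d (p i) q * d x q = a i * d (p i) q"
        using leon_tri2[OF bm_tri[OF X(1) SX[OF pi] x SX[OF q]] ax] .
      show "a i * d' y (F q) * d x q = a i * d' y (F q)"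
        using leon_trans[OF leon_trans[OF t1 t2] t3] .
    qed
    thus ?thesis using y unfolding P_def by blast
  qed
  have contrP: "P x (g x)" if g: "\<forall>x\<in>X. g x \<in> Y" "contractive X d d' g" "g o0 = o0'"
    "\<forall>x\<in>R. g x = f x" and x: "x \<in> X" for g x
  proof -
    have gF: "g p = F p" if "p \<in> S" for p using that g o0R by (auto simp: S_def F_def)
    have "ble (d' (g x) (F p)) (d x p)" if p: "p \<in> S" for p
      using g(2) x SX[OF p] gF[OF p] unfolding contractive_def by metis
    thus ?thesis using g x unfolding P_def by auto
  qed
  have Pcontr: "contractive X d d' g" if Pg: "\<forall>x\<in>X. P x (g x)" for g
    unfolding contractive_def
  proof (intro ballI)
    fix x y assume x: "x \<in> X" and y: "y \<in> X"
    obtain n q b where q: "\<forall>k<n. q k \<in> S" and cc: "is_convex_comb d y n q b"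
      using rep[OF y] by blast
    have pa: "partition_of_unity n b" using cc by (simp add: is_convex_comb_def)
    have gx: "g x \<in> Y" and gy: "g y \<in> Y" using Pg x y by (auto simp: P_def)
    show "ble (d' (g x) (g y)) (d x y)"
    proof (rule pou_ble[OF pa], intro allI impI)
      fix k assume k: "k < n"
      have qk: "q k \<in> S" using q k by blast
      have by0: "b k * d y (q k) = 0" using cc k by (simp add: is_convex_comb_def)
      have s1: "b k * d' (g y) (F (q k)) = 0"
        using leon_zero[OF by0 leon_ble] Pg y qk by (auto simp: P_def)
      have s1': "b k * d' (F (q k)) (g y) = 0" using s1 bm_sym[OF Y(1) gy FY[OF qk]] by simp
      have s2: "b k * d' (g x) (g y) * d' (g x) (F (q k)) = b k * d' (g x) (g y)"
        using leon_tri[OF bm_tri[OF Y(1) gx FY[OF qk] gy] s1'] .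
      have s3: "b k * d' (g x) (F (q k)) * d x (q k) = b k * d' (g x) (F (q k))"
        using Pg x qk by (intro leon_ble) (auto simp: P_def)
      have s4: "b k * d x (q k) * d x y = b k * d x (q k)"
        using leon_tri[OF bm_tri[OF X(1) x y SX[OF qk]] by0] .
      show "b k * d' (g x) (g y) * d x y = b k * d' (g x) (g y)"
        using leon_trans[OF leon_trans[OF s2 s3] s4] .
    qed
  qed
  have part1: "(\<exists>g. (\<forall>x\<in>X. g x \<in> Y) \<and> contractive X d d' g \<and> g o0 = o0' \<and> (\<forall>x\<in>R. g x = f x))
            \<longleftrightarrow> (\<forall>x\<in>R. ble (d' o0' (f x)) (d o0 x))"
  proof
    assume "\<exists>g. (\<forall>x\<in>X. g x \<in> Y) \<and> contractive X d d' g \<and> g o0 = o0' \<and> (\<forall>x\<in>R. g x = f x)"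
    then obtain g where g: "contractive X d d' g" "g o0 = o0'" "\<forall>x\<in>R. g x = f x" by blast
    show "\<forall>x\<in>R. ble (d' o0' (f x)) (d o0 x)"
      using g RX X(3) unfolding contractive_def by force
  next
    assume hyp: "\<forall>x\<in>R. ble (d' o0' (f x)) (d o0 x)"
    define g where "g x = (SOME y. P x y)" for x
    have Pg: "\<forall>x\<in>X. P x (g x)" unfolding g_def using ex[OF hyp] by (metis someI_ex)
    have gY: "\<forall>x\<in>X. g x \<in> Y" using Pg by (auto simp: P_def)
    have "P o0 o0'" unfolding P_def
    proof (intro conjI ballI)
      fix p assume p: "p \<in> S"
      show "ble (d' o0' (F p)) (d o0 p)"
        using C[OF hyp _ p, of o0] by (simp add: S_def F_def)
    qed (rule Y(3))
    hence g0: "g o0 = o0'" using uniq[OF X(3)] Pg X(3) by blast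
    have gR: "g x = f x" if x: "x \<in> R" for x
    proof -
      have "x \<in> S" using x by (simp add: S_def)
      hence "ble (d' (g x) (F x)) (d x x)" using Pg RX x by (auto simp: P_def)
      hence "d' (g x) (F x) = 0" using bm_zero[OF X(1)] RX x ble_zero by force
      hence "g x = F x" using bm_eq[OF Y(1)] gY FY \<open>x \<in> S\<close> RX x by blast
      thus ?thesis using x o0R by (auto simp: F_def)
    qed
    show "\<exists>g. (\<forall>x\<in>X. g x \<in> Y) \<and> contractive X d d' g \<and> g o0 = o0' \<and> (\<forall>x\<in>R. g x = f x)"
      using gY Pcontr[OF Pg] g0 gR by blast
  qed
  show ?thesis
  proof (intro conjI part1 allI impI ballI)
    fix g h x assume H: "(\<forall>x\<in>X. g x \<in> Y) \<and> contractive X d d' g \<and> g o0 = o0' \<and> (\<forall>x\<in>R. g x = f x)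
             \<and> (\<forall>x\<in>X. h x \<in> Y) \<and> contractive X d d' h \<and> h o0 = o0' \<and> (\<forall>x\<in>R. h x = f x)"
      and x: "x \<in> X"
    show "g x = h x" using uniq[OF x contrP[of g x] contrP[of h x]] H x by blast
  qed
qed

end
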